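(* Let $(W,\omega^W)$ be a vertex operator algebra and $\omega'\in W_2$, with $Y(\omega',z)=\sum_{n\in\mathbb Z}L'(n)z^{-n-2}$. Then $\omega'$ is a semi-conformal vector of $(W,\omega^W)$ if and only if $L'(0)\omega'=L^W(0)\omega'=2\omega'$; $L'(1)\omega'=L^W(1)\omega'=0$; $L'(2)\omega'=L^W(2)\omega'=\frac{c'}{2}\mathbf 1$ for some $c'\in\mathbb C$; $L'(-1)\omega'=L^W(-1)\omega'$; and $L'(n)\omega'=L^W(n)\omega'=0$ for all $n\ge 3$.
   Context: $(W,\omega^W)$ is a vertex operator algebra ($\mathbb Z$-graded by $L^W(0)$-eigenvalues, finite-dimensional graded pieces, bounded below), $Y(\omega^W,z)=\sum_n L^W(n)z^{-n-2}$. A semi-conformal vector of $(W,\omega^W)$ is a vector $\omega'$ which is the conformal vector of a vertex operator subalgebra $(U,\omega')$ (vertex subalgebra with a possibly different conformal vector) such that $L^W(n)|_U=L'(n)|_U$ for all $n\ge 0$. *)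

theory Defs
  imports Complex_Main
begin

text \<open>
  A vertex operator is encoded by its modes:
  md u n v denotes u_n v, i.e. Y(u,z) = sum over n of u_n z^(-n-1).
  All structure is relativised to a carrier V, so that vertex subalgebras can be expressed
  with the same vertex operator map restricted to a subspace.
\<close>

text \<open>Sum of a finitely supported family indexed by nat (all sums occurring below are
  finitely supported because of the truncation axiom).\<close>
definition fsum :: "(nat \<Rightarrow> 'v::ab_group_add) \<Rightarrow> 'v" where
  "fsum f = (\<Sum>i\<in>{i. f i \<noteq> 0}. f i)"

definition is_vertex_algebra ::
  "(complex \<Rightarrow> 'v::ab_group_add \<Rightarrow> 'v) \<Rightarrow> 'v set \<Rightarrow> ('v \<Rightarrow> int \<Rightarrow> 'v \<Rightarrow> 'v) \<Rightarrow> 'v \<Rightarrow> bool"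
where
  "is_vertex_algebra sc V md vac \<longleftrightarrow>
     vector_space sc \<and> module.subspace sc V \<and> vac \<in> V
     \<comment> \<open>closure and bilinearity of the modes\<close>
     \<and> (\<forall>u\<in>V. \<forall>v\<in>V. \<forall>n. md u n v \<in> V)
     \<and> (\<forall>u\<in>V. \<forall>v\<in>V. \<forall>w\<in>V. \<forall>n. md u n (v + w) = md u n v + md u n w
                          \<and> md (v + w) n u = md v n u + md w n u)
     \<and> (\<forall>u\<in>V. \<forall>v\<in>V. \<forall>a n. md u n (sc a v) = sc a (md u n v)
                          \<and> md (sc a u) n v = sc a (md u n v))
     \<comment> \<open>truncation\<close>
     \<and> (\<forall>u\<in>V. \<forall>v\<in>V. \<exists>N. \<forall>n\<ge>N. md u n v = 0)
     \<comment> \<open>vacuum and creation properties\<close>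
     \<and> (\<forall>v\<in>V. \<forall>n. md vac n v = (if n = -1 then v else 0))
     \<and> (\<forall>u\<in>V. md u (-1) vac = u \<and> (\<forall>n\<ge>0. md u n vac = 0))
     \<comment> \<open>Borcherds (Jacobi) identity\<close>
     \<and> (\<forall>u\<in>V. \<forall>v\<in>V. \<forall>w\<in>V. \<forall>p q r :: int.
          fsum (\<lambda>i. sc ((of_int p :: complex) gchoose i) (md (md u (r + int i) v) (p + q - int i) w))
        = fsum (\<lambda>i. sc ((-1) ^ i * ((of_int r :: complex) gchoose i))
                    (md u (p + r - int i) (md v (q + int i) w)
                     - sc (if even r then 1 else -1) (md v (q + r - int i) (md u (p + int i) w)))))"

text \<open>Virasoro operators L(n) = omega_(n+1), i.e. Y(omega,z) = sum L(n) z^(-n-2).\<close>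
definition Lop :: "('v \<Rightarrow> int \<Rightarrow> 'v \<Rightarrow> 'v) \<Rightarrow> 'v \<Rightarrow> int \<Rightarrow> 'v \<Rightarrow> 'v" where
  "Lop md \<omega> n = md \<omega> (n + 1)"

definition wt_space ::
  "(complex \<Rightarrow> 'v \<Rightarrow> 'v) \<Rightarrow> 'v set \<Rightarrow> ('v \<Rightarrow> int \<Rightarrow> 'v \<Rightarrow> 'v) \<Rightarrow> 'v \<Rightarrow> int \<Rightarrow> 'v set" where
  "wt_space sc V md \<omega> n = {v \<in> V. Lop md \<omega> 0 v = sc (of_int n) v}"

definition is_VOA ::
  "(complex \<Rightarrow> 'v::ab_group_add \<Rightarrow> 'v) \<Rightarrow> 'v set \<Rightarrow> ('v \<Rightarrow> int \<Rightarrow> 'v \<Rightarrow> 'v) \<Rightarrow> 'v \<Rightarrow> 'v \<Rightarrow> bool"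
where
  "is_VOA sc V md vac \<omega> \<longleftrightarrow>
     is_vertex_algebra sc V md vac \<and> \<omega> \<in> V
     \<comment> \<open>Virasoro relations with some central charge c\<close>
     \<and> (\<exists>c::complex. \<forall>m n :: int. \<forall>v\<in>V.
          Lop md \<omega> m (Lop md \<omega> n v) - Lop md \<omega> n (Lop md \<omega> m v)
          = sc (of_int (m - n)) (Lop md \<omega> (m + n) v)
            + (if m + n = 0 then sc (of_int (m ^ 3 - m) / 12 * c) v else 0))
     \<comment> \<open>L(-1)-derivative property: Y(L(-1)u,z) = d/dz Y(u,z)\<close>
     \<and> (\<forall>u\<in>V. \<forall>v\<in>V. \<forall>n. md (Lop md \<omega> (-1) u) n v = sc (- of_int n) (md u (n - 1) v))
     \<comment> \<open>Z-grading by L(0)-eigenvalues: V is the direct sum of the weight spaces\<close>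
     \<and> (\<forall>v\<in>V. \<exists>S f. finite S \<and> (\<forall>n\<in>S. f n \<in> wt_space sc V md \<omega> n) \<and> v = sum f S)
     \<comment> \<open>finite-dimensional graded pieces\<close>
     \<and> (\<forall>n. \<exists>B. finite B \<and> B \<subseteq> wt_space sc V md \<omega> n
              \<and> wt_space sc V md \<omega> n \<subseteq> module.span sc B)
     \<comment> \<open>grading bounded below\<close>
     \<and> (\<exists>N. \<forall>n<N. wt_space sc V md \<omega> n = {0})"

definition semi_conformal ::
  "(complex \<Rightarrow> 'v::ab_group_add \<Rightarrow> 'v) \<Rightarrow> ('v \<Rightarrow> int \<Rightarrow> 'v \<Rightarrow> 'v) \<Rightarrow> 'v \<Rightarrow> 'v \<Rightarrow> 'v \<Rightarrow> bool"
where
  "semi_conformal sc md vac \<omega>W \<omega>' \<longleftrightarrow>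
     (\<exists>U. is_VOA sc U md vac \<omega>'
          \<and> (\<forall>n\<ge>0. \<forall>u\<in>U. Lop md \<omega>W n u = Lop md \<omega>' n u))"

end

theory Submission imports Defs begin

lemma gch0: "i>0 \<Longrightarrow> (0::complex) gchoose i = 0" by (cases i) (auto simp: gbinomial_Suc)
lemma gch1: "i\<ge>2 \<Longrightarrow> (1::complex) gchoose i = 0"
proof -
  assume "i \<ge> 2"
  then obtain k where k: "i = Suc (Suc k)" by (metis add_2_eq_Suc le_Suc_ex)
  have "(\<Prod>j\<le>Suc k. (1::complex) - of_nat j) = 0"
    proof (rule prod_zero)
    show "\<exists>a\<in>{..Suc k}. (1::complex) - of_nat a = 0" by (rule bexI[of _ 1]) auto
  qed simp
  then show ?thesis by (simp only: k gbinomial_Suc) simp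
qed
lemma gch3: "((of_int p)::complex) gchoose 3 = of_int p * (of_int p - 1) * (of_int p - 2) / 6"
  by (simp add: gbinomial_Suc numeral_eq_Suc atMost_Suc)

lemma fsum_single: "(\<And>i. i > 0 \<Longrightarrow> f i = 0) \<Longrightarrow> fsum f = f 0"
proof -
  assume h: "\<And>i. i > 0 \<Longrightarrow> f i = 0"
  show ?thesis
  proof (cases "f 0 = 0")
    case True
    then have "{i. f i \<noteq> 0} = {}" using h by auto (metis gr0I)
    then show ?thesis using True by (simp add: fsum_def)
  next
    case False
    then have "{i. f i \<noteq> 0} = {0}" using h by auto
    then show ?thesis by (simp add: fsum_def)
  qed
qed

lemma fsum_upto: "(\<And>i. i \<ge> N \<Longrightarrow> f i = 0) \<Longrightarrow> fsum f = (\<Sum>i<N. f i)"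
proof -
  assume h: "\<And>i. i \<ge> N \<Longrightarrow> f i = 0"
  have s: "{i. f i \<noteq> 0} \<subseteq> {..<N}" using h by (auto simp: not_less[symmetric])
  show ?thesis unfolding fsum_def
    by (rule sum.mono_neutral_left) (use s in auto)
qed

lemma fsum_cong: assumes "\<And>i. f i = g i" shows "fsum f = fsum g"
  using assms by (metis ext)

locale VW =
  fixes sc :: "complex \<Rightarrow> 'v::ab_group_add \<Rightarrow> 'v"
    and md :: "'v \<Rightarrow> int \<Rightarrow> 'v \<Rightarrow> 'v"
    and vac \<omega>W :: 'v
  assumes W: "is_VOA sc UNIV md vac \<omega>W"
begin

lemma VA: "is_vertex_algebra sc UNIV md vac" using W by (simp add: is_VOA_def)

sublocale vector_space sc using VA by (simp add: is_vertex_algebra_def)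

lemma addR: "md u n (v + w) = md u n v + md u n w"
  using VA by (simp add: is_vertex_algebra_def)
lemma addL: "md (v + w) n u = md v n u + md w n u"
  using VA by (simp add: is_vertex_algebra_def)
lemma scR: "md u n (sc a v) = sc a (md u n v)"
  using VA by (simp add: is_vertex_algebra_def)
lemma scL: "md (sc a u) n v = sc a (md u n v)"
  using VA by (simp add: is_vertex_algebra_def)
lemma vacL: "md vac n v = (if n = -1 then v else 0)"
  using VA by (simp add: is_vertex_algebra_def)
lemma creat1: "md u (-1) vac = u"
  using VA by (simp add: is_vertex_algebra_def)
lemma creat2: "n \<ge> 0 \<Longrightarrow> md u n vac = 0"
  using VA by (simp add: is_vertex_algebra_def)
lemma borch: "fsum (\<lambda>i. sc ((of_int p :: complex) gchoose i) (md (md u (r + int i) v) (p + q - int i) w))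
        = fsum (\<lambda>i. sc ((-1) ^ i * ((of_int r :: complex) gchoose i))
                    (md u (p + r - int i) (md v (q + int i) w)
                     - sc (if even r then 1 else -1) (md v (q + r - int i) (md u (p + int i) w))))"
  using VA unfolding is_vertex_algebra_def by blast
lemma derivW: "md (md \<omega>W 0 u) n v = sc (- of_int n) (md u (n - 1) v)"
  using W unfolding is_VOA_def Lop_def by auto

lemma Wfin: "\<exists>B. finite B \<and> B \<subseteq> wt_space sc UNIV md \<omega>W n \<and> wt_space sc UNIV md \<omega>W n \<subseteq> module.span sc B"
  using W[unfolded is_VOA_def, THEN conjunct2, THEN conjunct2, THEN conjunct2, THEN conjunct2, THEN conjunct2, THEN conjunct1] by blast
lemma Wbb: "\<exists>N. \<forall>n<N. wt_space sc UNIV md \<omega>W n = {0}"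
  using W[unfolded is_VOA_def, THEN conjunct2, THEN conjunct2, THEN conjunct2, THEN conjunct2, THEN conjunct2, THEN conjunct2] .

lemma trunc: "\<exists>N. \<forall>n\<ge>N. md u n v = 0"
  using VA by (simp add: is_vertex_algebra_def)
lemma VS: "vector_space sc"
  using VA by (simp add: is_vertex_algebra_def)

lemma md0R: "md u n 0 = 0" using scR[where u=u and n=n and v=0 and a=0] by simp
lemma md0L: "md 0 n u = 0" using scL[where u=0 and n=n and v=u and a=0] by simp
lemma sumR: "md u n (sum f S) = (\<Sum>x\<in>S. md u n (f x))"
  by (induct S rule: infinite_finite_induct) (auto simp: md0R addR)
lemma diffR: "md u n (v - w) = md u n v - md u n w"
  by (metis add_diff_cancel addR diff_add_cancel)

lemma comm: "md u p (md v q w) - md v q (md u p w)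
   = fsum (\<lambda>i. sc ((of_int p :: complex) gchoose i) (md (md u (int i) v) (p + q - int i) w))"
proof -
  have "fsum (\<lambda>i. sc ((-1) ^ i * ((of_int 0 :: complex) gchoose i))
                    (md u (p + 0 - int i) (md v (q + int i) w)
                     - sc (if even (0::int) then 1 else -1) (md v (q + 0 - int i) (md u (p + int i) w))))
       = md u p (md v q w) - md v q (md u p w)"
    by (subst fsum_single) (auto simp: gch0)
  then show ?thesis using borch[where p=p and r=0 and u=u and v=v and q=q and w=w] by simp
qed

lemma iter: "md (md u r v) q w = fsum (\<lambda>i. sc ((-1) ^ i * ((of_int r :: complex) gchoose i))
                    (md u (r - int i) (md v (q + int i) w)
                     - sc (if even r then 1 else -1) (md v (q + r - int i) (md u (int i) w))))"
proof -
  have "fsum (\<lambda>i. sc ((of_int 0 :: complex) gchoose i) (md (md u (r + int i) v) (0 + q - int i) w))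
     = md (md u r v) q w"
    by (subst fsum_single) (auto simp: gch0)
  then show ?thesis using borch[where p=0 and r=r and u=u and v=v and q=q and w=w] by simp
qed

end

locale VC = VW sc md vac \<omega>W for sc :: "complex \<Rightarrow> 'v::ab_group_add \<Rightarrow> 'v" and md vac \<omega>W +
  fixes \<omega>' :: 'v and c' :: complex
  assumes w2: "md \<omega>W 1 \<omega>' = sc 2 \<omega>'"
    and e: "\<And>i::nat. md \<omega>' (int i) \<omega>' = md \<omega>W (int i) \<omega>'"
    and h1: "md \<omega>W 2 \<omega>' = 0"
    and h2: "md \<omega>W 3 \<omega>' = sc (c'/2) vac"
    and h3: "\<And>i::nat. i \<ge> 4 \<Longrightarrow> md \<omega>W (int i) \<omega>' = 0"
begin

lemma e0: "md \<omega>' 0 \<omega>' = md \<omega>W 0 \<omega>'" using e[of 0] by simp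
lemma e1: "md \<omega>' 1 \<omega>' = sc 2 \<omega>'" using e[of 1] w2 by simp
lemma e2: "md \<omega>' 2 \<omega>' = 0" using e[of 2] h1 by simp
lemma e3: "md \<omega>' 3 \<omega>' = sc (c'/2) vac" using e[of 3] h2 by simp
lemma e4: "i \<ge> 4 \<Longrightarrow> md \<omega>' (int i) \<omega>' = 0" using e[of i] h3[of i] by simp

inductive_set Gen :: "'v set" where
  gvac: "vac \<in> Gen"
| gadd: "u \<in> Gen \<Longrightarrow> v \<in> Gen \<Longrightarrow> u + v \<in> Gen"
| gsc: "u \<in> Gen \<Longrightarrow> sc a u \<in> Gen"
| gmd: "u \<in> Gen \<Longrightarrow> md \<omega>' k u \<in> Gen"

lemma gen0: "0 \<in> Gen" using gsc[OF gvac, of 0] by simp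
lemma gendiff: "u \<in> Gen \<Longrightarrow> v \<in> Gen \<Longrightarrow> u - v \<in> Gen"
  using gadd[of u "sc (-1) v"] gsc[of v "-1"] by simp
lemma gensum: "(\<And>x. x \<in> S \<Longrightarrow> f x \<in> Gen) \<Longrightarrow> sum f S \<in> Gen"
  by (induct S rule: infinite_finite_induct) (auto intro: gen0 gadd)
lemma genfsum: "(\<And>i. f i \<in> Gen) \<Longrightarrow> fsum f \<in> Gen"
  unfolding fsum_def by (rule gensum) auto
lemma gen_subspace: "subspace Gen"
  unfolding subspace_def using gen0 gadd gsc by blast
lemma gen_omega: "\<omega>' \<in> Gen" using gmd[OF gvac, of "-1"] creat1 by simp

lemma gen_md: "u \<in> Gen \<Longrightarrow> v \<in> Gen \<Longrightarrow> md u n v \<in> Gen"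
proof (induction u arbitrary: v n rule: Gen.induct)
  case gvac then show ?case by (simp add: vacL gen0)
next
  case (gadd u1 u2) then show ?case by (simp add: addL Gen.gadd)
next
  case (gsc u a) then show ?case by (simp add: scL Gen.gsc)
next
  case (gmd u k)
  show ?case unfolding iter
    by (intro genfsum Gen.gsc gendiff Gen.gmd gmd.IH gmd.prems)
qed

lemma agree: "u \<in> Gen \<Longrightarrow> md \<omega>W (int p) u = md \<omega>' (int p) u"
proof (induction u rule: Gen.induct)
  case gvac then show ?case by (simp add: creat2)
next
  case (gadd u1 u2) then show ?case by (simp add: addR)
next
  case (gsc u a) then show ?case by (simp add: scR)
next
  case (gmd w k)
  have A: "md \<omega>W (int p) (md \<omega>' k w) = md \<omega>' k (md \<omega>W (int p) w)
     + fsum (\<lambda>i. sc ((of_int (int p) :: complex) gchoose i) (md (md \<omega>W (int i) \<omega>') (int p + k - int i) w))"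
    using comm[where u=\<omega>W and p="int p" and v=\<omega>' and q=k and w=w] by (metis add.commute diff_eq_eq)
  have B: "md \<omega>' (int p) (md \<omega>' k w) = md \<omega>' k (md \<omega>' (int p) w)
     + fsum (\<lambda>i. sc ((of_int (int p) :: complex) gchoose i) (md (md \<omega>' (int i) \<omega>') (int p + k - int i) w))"
    using comm[where u=\<omega>' and p="int p" and v=\<omega>' and q=k and w=w] by (metis add.commute diff_eq_eq)
  show ?case unfolding A B gmd.IH e ..
qed


lemma sum4: "(\<Sum>i<4. (f::nat\<Rightarrow>'v) i) = f 0 + f 1 + f 2 + (f 3 :: 'v)"
  by (simp add: numeral_eq_Suc lessThan_Suc add.assoc)

lemma vir: "md \<omega>' (m+1) (md \<omega>' (n+1) v) - md \<omega>' (n+1) (md \<omega>' (m+1) v)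
   = sc (of_int (m-n)) (md \<omega>' (m+n+1) v) + (if m+n=0 then sc (of_int (m^3-m)/12 * c') v else 0)"
proof -
  define X where "X = md \<omega>' (m+n+1) v"
  define f where "f = (\<lambda>i. sc ((of_int (m+1) :: complex) gchoose i) (md (md \<omega>' (int i) \<omega>') (m+1 + (n+1) - int i) v))"
  have "md \<omega>' (m+1) (md \<omega>' (n+1) v) - md \<omega>' (n+1) (md \<omega>' (m+1) v) = fsum f"
    unfolding f_def by (rule comm)
  also have "\<dots> = (\<Sum>i<4. f i)"
    by (rule fsum_upto) (simp add: f_def e4 md0L)
  also have "\<dots> = f 0 + f 1 + f 2 + f 3" by (rule sum4)
  also have "f 0 = sc (- of_int (m+n+2)) X"
    by (simp add: f_def e0 derivW X_def algebra_simps)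
  also have "f 1 = sc (of_int (m+1) * 2) X"
    by (simp add: f_def e1 scL X_def algebra_simps)
  also have "f 2 = 0"
    by (simp add: f_def e2 md0L)
  also have "f 3 = (if m+n=0 then sc (of_int (m^3-m)/12 * c') v else 0)"
  proof -
    have "f 3 = sc (((of_int (m+1) :: complex) gchoose 3) * (c'/2)) (if m+n=0 then v else 0)"
      by (simp add: f_def e3 scL vacL algebra_simps)
    also have "(((of_int (m+1) :: complex) gchoose 3) * (c'/2)) = of_int (m^3-m)/12 * c'"
      unfolding gch3 by (simp add: field_simps power3_eq_cube)
    finally show ?thesis by simp
  qed
  finally have F: "md \<omega>' (m+1) (md \<omega>' (n+1) v) - md \<omega>' (n+1) (md \<omega>' (m+1) v) =
     sc (- of_int (m+n+2)) X + sc (of_int (m+1) * 2) X + 0 + (if m+n=0 then sc (of_int (m^3-m)/12 * c') v else 0)" .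
  have G: "sc (- of_int (m+n+2)) X + sc (of_int (m+1) * 2) X = sc (- of_int (m+n+2) + of_int (m+1) * 2) X"
    by (rule scale_left_distrib[symmetric])
  have H: "(- of_int (m+n+2) + of_int (m+1) * 2 :: complex) = of_int (m-n)" by simp
  show ?thesis unfolding F G H by (simp add: X_def)
qed


lemma deriv_gen: "u \<in> Gen \<Longrightarrow> md (md \<omega>' 0 u) n v = sc (- of_int n) (md u (n - 1) v)"
proof -
  assume "u \<in> Gen"
  then have "md \<omega>' 0 u = md \<omega>W 0 u" using agree[of u 0] by simp
  then show ?thesis using derivW by simp
qed

lemma homog: assumes "md \<omega>W 1 w = sc (of_int m) w"
  shows "md \<omega>W 1 (md \<omega>' k w) = sc (of_int (m + 1 - k)) (md \<omega>' k w)"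
proof -
  define X where "X = md \<omega>' k w"
  define f where "f = (\<lambda>i. sc ((of_int 1 :: complex) gchoose i) (md (md \<omega>W (int i) \<omega>') (1 + k - int i) w))"
  have "md \<omega>W 1 (md \<omega>' k w) - md \<omega>' k (md \<omega>W 1 w) = fsum f"
    unfolding f_def by (rule comm)
  also have "\<dots> = (\<Sum>i<2. f i)"
    by (rule fsum_upto) (simp add: f_def gch1)
  also have "\<dots> = f 0 + f 1" by (simp add: numeral_eq_Suc lessThan_Suc)
  also have "f 0 = sc (- of_int (1 + k)) X"
    by (simp add: f_def derivW X_def)
  also have "f 1 = sc 2 X"
    by (simp add: f_def w2 scL X_def)
  finally have F0: "md \<omega>W 1 (md \<omega>' k w) - md \<omega>' k (md \<omega>W 1 w) = sc (- of_int (1 + k)) X + sc 2 X" .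
  have F: "md \<omega>W 1 (md \<omega>' k w) = sc (of_int m) X + (sc (- of_int (1 + k)) X + sc 2 X)"
  proof -
    have "md \<omega>' k (md \<omega>W 1 w) = sc (of_int m) X" by (simp add: assms scR X_def)
    with F0 show ?thesis by (metis add.commute diff_eq_eq)
  qed
  show ?thesis unfolding F scale_left_distrib[symmetric] by (simp add: X_def algebra_simps)
qed

definition graded :: "'v \<Rightarrow> bool" where
  "graded v \<longleftrightarrow> (\<exists>S f. finite S \<and> (\<forall>n\<in>S. f n \<in> Gen \<and> md \<omega>W 1 (f n) = sc (of_int n) (f n)) \<and> v = sum f S)"

lemma graded_all: "u \<in> Gen \<Longrightarrow> graded u"
proof (induction u rule: Gen.induct)
  case gvac
  show ?case unfolding graded_def
    by (rule exI[of _ "{0}"], rule exI[of _ "\<lambda>_. vac"]) (simp add: creat2 Gen.gvac)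
next
  case (gadd u1 u2)
  from gadd.IH(1) obtain S1 f1 where 1: "finite S1" "\<forall>n\<in>S1. f1 n \<in> Gen \<and> md \<omega>W 1 (f1 n) = sc (of_int n) (f1 n)" "u1 = sum f1 S1"
    unfolding graded_def by blast
  from gadd.IH(2) obtain S2 f2 where 2: "finite S2" "\<forall>n\<in>S2. f2 n \<in> Gen \<and> md \<omega>W 1 (f2 n) = sc (of_int n) (f2 n)" "u2 = sum f2 S2"
    unfolding graded_def by blast
  define g1 where "g1 n = (if n \<in> S1 then f1 n else 0)" for n
  define g2 where "g2 n = (if n \<in> S2 then f2 n else 0)" for n
  have s1: "sum f1 S1 = sum g1 (S1 \<union> S2)"
    by (rule sum.mono_neutral_cong_left) (use 1 2 in \<open>auto simp: g1_def\<close>)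
  have s2: "sum f2 S2 = sum g2 (S1 \<union> S2)"
    by (rule sum.mono_neutral_cong_left) (use 1 2 in \<open>auto simp: g2_def\<close>)
  show ?case unfolding graded_def
  proof (intro exI conjI)
    show "finite (S1 \<union> S2)" using 1 2 by simp
    show "u1 + u2 = sum (\<lambda>n. g1 n + g2 n) (S1 \<union> S2)"
      by (simp add: sum.distrib 1 2 s1 s2)
    show "\<forall>n\<in>S1 \<union> S2. g1 n + g2 n \<in> Gen \<and> md \<omega>W 1 (g1 n + g2 n) = sc (of_int n) (g1 n + g2 n)"
      using 1 2 by (auto simp: g1_def g2_def addR md0R scale_right_distrib gen0 intro: Gen.gadd)
  qed
next
  case (gsc u a)
  from gsc.IH obtain S f where 1: "finite S" "\<forall>n\<in>S. f n \<in> Gen \<and> md \<omega>W 1 (f n) = sc (of_int n) (f n)" "u = sum f S"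
    unfolding graded_def by blast
  show ?case unfolding graded_def
  proof (intro exI conjI)
    show "finite S" by fact
    show "sc a u = sum (\<lambda>n. sc a (f n)) S" by (simp add: 1 scale_sum_right)
    show "\<forall>n\<in>S. sc a (f n) \<in> Gen \<and> md \<omega>W 1 (sc a (f n)) = sc (of_int n) (sc a (f n))"
      using 1 by (auto simp: scR mult.commute intro: Gen.gsc)
  qed
next
  case (gmd u k)
  from gmd.IH obtain S f where 1: "finite S" "\<forall>n\<in>S. f n \<in> Gen \<and> md \<omega>W 1 (f n) = sc (of_int n) (f n)" "u = sum f S"
    unfolding graded_def by blast
  define sh where "sh n = n + 1 - k" for n
  have inj: "inj_on sh S" by (auto simp: sh_def inj_on_def)
  have shi: "sh n - 1 + k = n" for n by (simp add: sh_def)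
  show ?case unfolding graded_def
  proof (intro exI conjI)
    show "finite (sh ` S)" using 1 by simp
    show "md \<omega>' k u = sum (\<lambda>n. md \<omega>' k (f (n - 1 + k))) (sh ` S)"
      by (simp add: sum.reindex[OF inj] shi 1 sumR)
    show "\<forall>n\<in>sh ` S. md \<omega>' k (f (n - 1 + k)) \<in> Gen \<and> md \<omega>W 1 (md \<omega>' k (f (n - 1 + k))) = sc (of_int n) (md \<omega>' k (f (n - 1 + k)))"
    proof
      fix n' assume "n' \<in> sh ` S"
      then obtain n where n: "n \<in> S" "n' = sh n" by auto
      show "md \<omega>' k (f (n' - 1 + k)) \<in> Gen \<and> md \<omega>W 1 (md \<omega>' k (f (n' - 1 + k))) = sc (of_int n') (md \<omega>' k (f (n' - 1 + k)))"
        using n 1 homog[of "f n" n k] by (auto simp: shi sh_def intro: Gen.gmd)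
    qed
  qed
qed

lemma wt_gen: "wt_space sc Gen md \<omega>' n = Gen \<inter> wt_space sc UNIV md \<omega>W n"
  unfolding wt_space_def Lop_def using agree[of _ 1] by auto


lemma gen_VA: "is_vertex_algebra sc Gen md vac"
proof -
  have "vector_space sc" using VA by (simp add: is_vertex_algebra_def)
  moreover have "module.subspace sc Gen" using gen_subspace .
  moreover have "\<forall>u\<in>Gen. \<forall>v\<in>Gen. \<forall>n. md u n v \<in> Gen" using gen_md by blast
  ultimately show ?thesis unfolding is_vertex_algebra_def
    using gvac addR addL scR scL trunc vacL creat1 creat2 borch by simp
qed

lemma gen_fin: "\<exists>B. finite B \<and> B \<subseteq> wt_space sc Gen md \<omega>' n \<and> wt_space sc Gen md \<omega>' n \<subseteq> span B"
proof -
  obtain B where B: "finite B" "B \<subseteq> wt_space sc UNIV md \<omega>W n" "wt_space sc UNIV md \<omega>W n \<subseteq> span B"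
    using Wfin by blast
  obtain B' where B': "B' \<subseteq> wt_space sc Gen md \<omega>' n" "independent B'" "wt_space sc Gen md \<omega>' n \<subseteq> span B'"
    "card B' = dim (wt_space sc Gen md \<omega>' n)"
    by (rule basis_exists)
  have "B' \<subseteq> span B" using B'(1) B(3) unfolding wt_gen by blast
  then have "finite B'" using independent_span_bound[OF B(1) B'(2)] by simp
  then show ?thesis using B' by blast
qed

lemma gen_bb: "\<exists>N. \<forall>n<N. wt_space sc Gen md \<omega>' n = {0}"
proof -
  obtain N where N: "\<forall>n<N. wt_space sc UNIV md \<omega>W n = {0}"
    using Wbb by blast
  have "wt_space sc Gen md \<omega>' n = {0}" if "n < N" for n
  proof -
    have "0 \<in> wt_space sc Gen md \<omega>' n" by (simp add: wt_space_def gen0 md0R Lop_def)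
    then show ?thesis using N that wt_gen by auto
  qed
  then show ?thesis by blast
qed

lemma gen_grad: "v \<in> Gen \<Longrightarrow> \<exists>S f. finite S \<and> (\<forall>n\<in>S. f n \<in> wt_space sc Gen md \<omega>' n) \<and> v = sum f S"
proof -
  assume v: "v \<in> Gen"
  from graded_all[OF v] obtain S f where 1: "finite S" "\<forall>n\<in>S. f n \<in> Gen \<and> md \<omega>W 1 (f n) = sc (of_int n) (f n)" "v = sum f S"
    unfolding graded_def by blast
  have "\<forall>n\<in>S. f n \<in> wt_space sc Gen md \<omega>' n"
  proof
    fix n assume n: "n \<in> S"
    then have "md \<omega>' 1 (f n) = md \<omega>W 1 (f n)" using 1 agree[of "f n" 1] by simp
    then show "f n \<in> wt_space sc Gen md \<omega>' n" using 1 n by (simp add: wt_space_def Lop_def)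
  qed
  then show ?thesis using 1 by blast
qed

lemma gen_VOA: "is_VOA sc Gen md vac \<omega>'"
  unfolding is_VOA_def
proof (intro conjI)
  show "is_vertex_algebra sc Gen md vac" by (rule gen_VA)
  show "\<omega>' \<in> Gen" by (rule gen_omega)
  show "\<exists>c. \<forall>m n. \<forall>v\<in>Gen. Lop md \<omega>' m (Lop md \<omega>' n v) - Lop md \<omega>' n (Lop md \<omega>' m v) =
          sc (of_int (m - n)) (Lop md \<omega>' (m + n) v) +
          (if m + n = 0 then sc (of_int (m ^ 3 - m) / 12 * c) v else 0)"
    by (rule exI[of _ c']) (simp add: Lop_def vir add.assoc)
  show "\<forall>u\<in>Gen. \<forall>v\<in>Gen. \<forall>n. md (Lop md \<omega>' (- 1) u) n v = sc (- of_int n) (md u (n - 1) v)"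
    using deriv_gen by (simp add: Lop_def)
  show "\<forall>v\<in>Gen. \<exists>S f. finite S \<and> (\<forall>n\<in>S. f n \<in> wt_space sc Gen md \<omega>' n) \<and> v = sum f S"
    using gen_grad by blast
  show "\<forall>n. \<exists>B. finite B \<and> B \<subseteq> wt_space sc Gen md \<omega>' n \<and> wt_space sc Gen md \<omega>' n \<subseteq> module.span sc B"
    using gen_fin by blast
  show "\<exists>N. \<forall>n<N. wt_space sc Gen md \<omega>' n = {0}" by (rule gen_bb)
qed

lemma gen_semi: "semi_conformal sc md vac \<omega>W \<omega>'"
  unfolding semi_conformal_def
proof (intro exI conjI allI impI ballI)
  show "is_VOA sc Gen md vac \<omega>'" by (rule gen_VOA)
  fix n :: int and u assume "n \<ge> 0" "u \<in> Gen"
  then show "Lop md \<omega>W n u = Lop md \<omega>' n u"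
    using agree[of u "nat (n+1)"] by (simp add: Lop_def)
qed

end

theorem proposition2p2:
  fixes sc :: "complex \<Rightarrow> 'v::ab_group_add \<Rightarrow> 'v"
    and md :: "'v \<Rightarrow> int \<Rightarrow> 'v \<Rightarrow> 'v"
    and vac \<omega>W \<omega>' :: 'v
  assumes W: "is_VOA sc UNIV md vac \<omega>W"
    and w2: "\<omega>' \<in> wt_space sc UNIV md \<omega>W 2"
  shows "semi_conformal sc md vac \<omega>W \<omega>' \<longleftrightarrow>
     (Lop md \<omega>' 0 \<omega>' = Lop md \<omega>W 0 \<omega>' \<and> Lop md \<omega>W 0 \<omega>' = sc 2 \<omega>'
      \<and> Lop md \<omega>' 1 \<omega>' = Lop md \<omega>W 1 \<omega>' \<and> Lop md \<omega>W 1 \<omega>' = 0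
      \<and> (\<exists>c'::complex. Lop md \<omega>' 2 \<omega>' = Lop md \<omega>W 2 \<omega>' \<and> Lop md \<omega>W 2 \<omega>' = sc (c' / 2) vac)
      \<and> Lop md \<omega>' (-1) \<omega>' = Lop md \<omega>W (-1) \<omega>'
      \<and> (\<forall>n\<ge>3. Lop md \<omega>' n \<omega>' = Lop md \<omega>W n \<omega>' \<and> Lop md \<omega>W n \<omega>' = 0))"
proof -
  interpret VW sc md vac \<omega>W by (rule VW.intro) (rule W)
  have w2': "md \<omega>W 1 \<omega>' = sc 2 \<omega>'" using w2 by (simp add: wt_space_def Lop_def)
  show ?thesis
  proof
    assume "semi_conformal sc md vac \<omega>W \<omega>'"
    then obtain U where U: "is_VOA sc U md vac \<omega>'"
      and ag: "\<forall>n\<ge>0. \<forall>u\<in>U. Lop md \<omega>W n u = Lop md \<omega>' n u"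
      unfolding semi_conformal_def by blast
    have UV: "is_vertex_algebra sc U md vac" using U[unfolded is_VOA_def, THEN conjunct1] .
    have vacU: "vac \<in> U" using UV[unfolded is_vertex_algebra_def, THEN conjunct2, THEN conjunct2, THEN conjunct1] .
    have omU: "\<omega>' \<in> U" using U[unfolded is_VOA_def, THEN conjunct2, THEN conjunct1] .
    obtain c where vir: "\<forall>m n. \<forall>v\<in>U. Lop md \<omega>' m (Lop md \<omega>' n v) - Lop md \<omega>' n (Lop md \<omega>' m v)
          = sc (of_int (m - n)) (Lop md \<omega>' (m + n) v)
            + (if m + n = 0 then sc (of_int (m ^ 3 - m) / 12 * c) v else 0)"
      using U[unfolded is_VOA_def, THEN conjunct2, THEN conjunct2, THEN conjunct1] by blast
    have derU: "\<forall>u\<in>U. \<forall>v\<in>U. \<forall>n. md (Lop md \<omega>' (-1) u) n v = sc (- of_int n) (md u (n - 1) v)"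
      using U[unfolded is_VOA_def, THEN conjunct2, THEN conjunct2, THEN conjunct2, THEN conjunct1] .
    have key: "md \<omega>' (k+1) \<omega>' = sc (of_int (k+2)) (md \<omega>' (k-1) vac) + (if k = 2 then sc (c/2) vac else 0)"
      if k: "k \<ge> 0" for k
    proof -
      have "Lop md \<omega>' k (Lop md \<omega>' (-2) vac) - Lop md \<omega>' (-2) (Lop md \<omega>' k vac)
          = sc (of_int (k - (-2))) (Lop md \<omega>' (k + (-2)) vac)
            + (if k + (-2) = 0 then sc (of_int (k ^ 3 - k) / 12 * c) vac else 0)"
        using vir vacU by blast
      moreover have "Lop md \<omega>' (-2) vac = \<omega>'" by (simp add: Lop_def creat1)
      moreover have "Lop md \<omega>' k vac = 0" using k by (simp add: Lop_def creat2)
      moreover have "(if k + (-2) = 0 then sc (of_int (k ^ 3 - k) / 12 * c) vac else 0)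
          = (if k = 2 then sc (c/2) vac else 0)" by auto
      ultimately show ?thesis by (simp add: Lop_def md0R add.commute)
    qed
    have agk: "md \<omega>W (k+1) \<omega>' = md \<omega>' (k+1) \<omega>'" if "k \<ge> 0" for k
      using ag omU that by (simp add: Lop_def)
    have L0: "md \<omega>' 1 \<omega>' = sc 2 \<omega>'" using key[of 0] by (simp add: creat1)
    have L1: "md \<omega>' 2 \<omega>' = 0" using key[of 1] by (simp add: creat2)
    have L2: "md \<omega>' 3 \<omega>' = sc (c/2) vac" using key[of 2] by (simp add: creat2)
    have Ln: "md \<omega>' (k+1) \<omega>' = 0" if "k \<ge> 3" for k using key[of k] that by (simp add: creat2)
    have Lm1a: "md \<omega>' 0 \<omega>' = md \<omega>' (-2) vac"
      using derU omU vacU creat1[of "md \<omega>' 0 \<omega>'"] by (force simp: Lop_def)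
    have Lm1b: "md \<omega>W 0 \<omega>' = md \<omega>' (-2) vac"
      using derivW[of \<omega>' "-1" vac] creat1[of "md \<omega>W 0 \<omega>'"] by simp
    show "Lop md \<omega>' 0 \<omega>' = Lop md \<omega>W 0 \<omega>' \<and> Lop md \<omega>W 0 \<omega>' = sc 2 \<omega>'
      \<and> Lop md \<omega>' 1 \<omega>' = Lop md \<omega>W 1 \<omega>' \<and> Lop md \<omega>W 1 \<omega>' = 0
      \<and> (\<exists>c'::complex. Lop md \<omega>' 2 \<omega>' = Lop md \<omega>W 2 \<omega>' \<and> Lop md \<omega>W 2 \<omega>' = sc (c' / 2) vac)
      \<and> Lop md \<omega>' (-1) \<omega>' = Lop md \<omega>W (-1) \<omega>'
      \<and> (\<forall>n\<ge>3. Lop md \<omega>' n \<omega>' = Lop md \<omega>W n \<omega>' \<and> Lop md \<omega>W n \<omega>' = 0)"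
      using agk[of 0] agk[of 1] agk[of 2] L0 L1 L2 Ln agk Lm1a Lm1b w2'
      by (simp add: Lop_def)
  next
    assume H: "Lop md \<omega>' 0 \<omega>' = Lop md \<omega>W 0 \<omega>' \<and> Lop md \<omega>W 0 \<omega>' = sc 2 \<omega>'
      \<and> Lop md \<omega>' 1 \<omega>' = Lop md \<omega>W 1 \<omega>' \<and> Lop md \<omega>W 1 \<omega>' = 0
      \<and> (\<exists>c'::complex. Lop md \<omega>' 2 \<omega>' = Lop md \<omega>W 2 \<omega>' \<and> Lop md \<omega>W 2 \<omega>' = sc (c' / 2) vac)
      \<and> Lop md \<omega>' (-1) \<omega>' = Lop md \<omega>W (-1) \<omega>'
      \<and> (\<forall>n\<ge>3. Lop md \<omega>' n \<omega>' = Lop md \<omega>W n \<omega>' \<and> Lop md \<omega>W n \<omega>' = 0)"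
    then obtain c' where c': "md \<omega>' 3 \<omega>' = md \<omega>W 3 \<omega>'" "md \<omega>W 3 \<omega>' = sc (c' / 2) vac"
      by (auto simp: Lop_def)
    have H0: "md \<omega>' 1 \<omega>' = md \<omega>W 1 \<omega>'" "md \<omega>' 2 \<omega>' = md \<omega>W 2 \<omega>'" "md \<omega>W 2 \<omega>' = 0"
      "md \<omega>' 0 \<omega>' = md \<omega>W 0 \<omega>'"
      using H by (simp_all add: Lop_def)
    have Hn: "md \<omega>' (n+1) \<omega>' = md \<omega>W (n+1) \<omega>' \<and> md \<omega>W (n+1) \<omega>' = 0" if "n \<ge> 3" for n
      using H that by (simp add: Lop_def)
    have h3: "md \<omega>W (int i) \<omega>' = 0" if "i \<ge> 4" for i :: nat
      using Hn[of "int i - 1"] that by simp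
    have e: "md \<omega>' (int i) \<omega>' = md \<omega>W (int i) \<omega>'" for i :: nat
    proof -
      consider "i = 0" | "i = 1" | "i = 2" | "i = 3" | "i \<ge> 4" by linarith
      then show ?thesis
      proof cases
        case 5 then show ?thesis using Hn[of "int i - 1"] by simp
      qed (use H0 c' in simp_all)
    qed
    interpret VC sc md vac \<omega>W \<omega>' c'
      by (rule VC.intro, unfold_locales, rule W) (use w2' e H0 c' h3 in auto)
    show "semi_conformal sc md vac \<omega>W \<omega>'" by (rule gen_semi)
  qed
qed

end
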